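(* Let $N\ge 2$ and let $A=J-I$ be the adjacency matrix of the complete graph $K_N$. For integers $k\ge1$, $m\ge1$ define $$\mathcal A[k,m]=\sum_{\substack{j_1+\cdots+j_k=m\\ j_i\ge1}}\ \prod_{i=1}^k (A^{j_i})_{11}.$$ Then for every $x\in(0,1)$, $$|\mathcal A[k,m]|\le \frac{(N-1)^m}{(N-1-x)^k}\,\frac{x^{2k-m}}{(1-x)^k};$$ in particular $|\mathcal A[k,m]|\le 2^{m-k}\frac{(N-1)^m}{(N-\frac32)^k}$, and, if $m>2k$, $$|\mathcal A[k,m]|\le\frac{(N-1)^m}{\left(N-1-\frac{m-2k}{m-k}\right)^k}\,\frac{(m-k)^{m-k}}{(m-2k)^{m-2k}k^k}.$$
   Context: $(A^{j})_{11}$ is the number of closed walks of length $j$ starting and ending at node $1$. *)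

theory Defs
  imports Complex_Main "Jordan_Normal_Form.Matrix"
begin

text \<open>Adjacency matrix J - I of the complete graph K_N (vertices 0..N-1; paper's node 1 is index 0).\<close>
definition K_adj :: "nat \<Rightarrow> int mat" where
  "K_adj N = mat N N (\<lambda>(i,j). if i = j then 0 else 1)"

definition walk11 :: "nat \<Rightarrow> nat \<Rightarrow> int" where
  "walk11 N j = (K_adj N ^\<^sub>m j) $$ (0,0)"

definition compositions :: "nat \<Rightarrow> nat \<Rightarrow> nat list set" where
  "compositions k m = {js. length js = k \<and> (\<forall>j\<in>set js. 1 \<le> j) \<and> sum_list js = m}"

definition calA :: "nat \<Rightarrow> nat \<Rightarrow> nat \<Rightarrow> int" where
  "calA N k m = (\<Sum>js\<in>compositions k m. \<Prod>j\<leftarrow>js. walk11 N j)"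

end

theory Submission
  imports Defs
begin

fun wk :: "int \<Rightarrow> nat \<Rightarrow> int \<times> int" where
  "wk n 0 = (1, 0)"
| "wk n (Suc j) = (n * snd (wk n j), fst (wk n j) + (n - 1) * snd (wk n j))"

lemma sum_diag:
  fixes d o' :: int
  assumes "i < N" "l < N"
  shows "(\<Sum>t\<in>{0..<N}. (if i = t then d else o') * (if t = l then 0 else 1))
        = (if i = l then (int N - 1) * o' else d + (int N - 2) * o')"
proof (cases "i = l")
  case True
  have "(\<Sum>t\<in>{0..<N}. (if i = t then d else o') * (if t = l then 0 else 1))
      = (\<Sum>t\<in>{0..<N} - {l}. o')"
    using assms True by (subst sum.remove[of _ l]) auto
  also have "\<dots> = (int N - 1) * o'" using assms by (simp add: of_nat_diff)
  finally show ?thesis using True by simp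
next
  case False
  have "(\<Sum>t\<in>{0..<N}. (if i = t then d else o') * (if t = l then 0 else 1))
      = (\<Sum>t\<in>{0..<N} - {l}. (if i = t then d else o'))"
    using assms by (subst sum.remove[of _ l]) auto
  also have "\<dots> = d + (\<Sum>t\<in>{0..<N} - {l} - {i}. o')"
    using assms False by (subst sum.remove[of _ i]) auto
  also have "\<dots> = d + (int N - 2) * o'" using assms False
    by (simp add: card_Diff_subset of_nat_diff)
  finally show ?thesis using False by simp
qed

lemma pow_K:
  "K_adj N ^\<^sub>m j = mat N N (\<lambda>(i,l). if i = l then fst (wk (int N - 1) j) else snd (wk (int N - 1) j))"
proof (induction j)
  case 0
  then show ?case by (auto simp: K_adj_def one_mat_def)
next
  case (Suc j)
  show ?case
  proof (rule eq_matI)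
    fix i l assume il: "i < dim_row (mat N N (\<lambda>(i,l). if i = l then fst (wk (int N - 1) (Suc j)) else snd (wk (int N - 1) (Suc j))))"
       "l < dim_col (mat N N (\<lambda>(i,l). if i = l then fst (wk (int N - 1) (Suc j)) else snd (wk (int N - 1) (Suc j))))"
    hence il2: "i < N" "l < N" by auto
    let ?B = "K_adj N ^\<^sub>m j"
    have "(K_adj N ^\<^sub>m Suc j) $$ (i, l) = (\<Sum>t\<in>{0..<N}. ?B $$ (i,t) * K_adj N $$ (t,l))"
    proof -
      have dK: "dim_row (K_adj N) = N" "dim_col (K_adj N) = N" by (auto simp: K_adj_def)
      have "(K_adj N ^\<^sub>m Suc j) $$ (i, l) = row ?B i \<bullet> col (K_adj N) l"
        using il2 dK by simp
      also have "\<dots> = (\<Sum>t\<in>{0..<N}. row ?B i $ t * col (K_adj N) l $ t)"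
        using dK by (simp add: scalar_prod_def)
      also have "\<dots> = (\<Sum>t\<in>{0..<N}. ?B $$ (i,t) * K_adj N $$ (t,l))"
        using dK il2 by (intro sum.cong) auto
      finally show ?thesis .
    qed
    also have "\<dots> = (\<Sum>t\<in>{0..<N}. (if i = t then fst (wk (int N - 1) j) else snd (wk (int N - 1) j)) * (if t = l then 0 else 1))"
      using il2 by (intro sum.cong) (simp_all add: Suc.IH, simp add: K_adj_def)
    also have "\<dots> = mat N N (\<lambda>(i,l). if i = l then fst (wk (int N - 1) (Suc j)) else snd (wk (int N - 1) (Suc j))) $$ (i, l)"
      using il2 by (subst sum_diag) (auto simp: algebra_simps)
    finally show "(K_adj N ^\<^sub>m Suc j) $$ (i, l) = mat N N (\<lambda>(i,l). if i = l then fst (wk (int N - 1) (Suc j)) else snd (wk (int N - 1) (Suc j))) $$ (i, l)" .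
  qed (auto simp: K_adj_def)
qed

lemma sum_lists_pow:
  fixes f :: "'a \<Rightarrow> real"
  assumes "finite D"
  shows "(\<Sum>xs\<in>{xs. set xs \<subseteq> D \<and> length xs = k}. prod_list (map f xs)) = (sum f D) ^ k"
proof (induction k)
  case 0
  have "{xs. set xs \<subseteq> D \<and> length xs = 0} = {[]}" by auto
  then show ?case by simp
next
  case (Suc k)
  have inj: "inj_on (\<lambda>(xs, n). n#xs) ({xs. set xs \<subseteq> D \<and> length xs = k} \<times> D)"
    by (auto simp: inj_on_def)
  have "(\<Sum>xs\<in>{xs. set xs \<subseteq> D \<and> length xs = Suc k}. prod_list (map f xs))
      = (\<Sum>p\<in>{xs. set xs \<subseteq> D \<and> length xs = k} \<times> D. prod_list (map f ((\<lambda>(xs, n). n#xs) p)))"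
    unfolding lists_length_Suc_eq by (subst sum.reindex[OF inj]) (simp add: comp_def)
  also have "\<dots> = (\<Sum>xs\<in>{xs. set xs \<subseteq> D \<and> length xs = k}. \<Sum>d\<in>D. f d * prod_list (map f xs))"
    by (simp add: sum.cartesian_product case_prod_beta)
  also have "\<dots> = (\<Sum>xs\<in>{xs. set xs \<subseteq> D \<and> length xs = k}. prod_list (map f xs)) * sum f D"
    by (simp add: sum_distrib_left sum_distrib_right mult.commute)
  also have "\<dots> = (sum f D) ^ Suc k" using Suc by simp
  finally show ?case .
qed

lemma prod_list_pow:
  fixes c :: "nat \<Rightarrow> real"
  shows "prod_list (map (\<lambda>j. c j * r ^ j) js) = prod_list (map c js) * r ^ sum_list js"
  by (induction js) (simp_all add: power_add algebra_simps)

lemma main_bound: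
  fixes c :: "nat \<Rightarrow> real" and n x :: real
  assumes c0: "\<And>j. c j \<ge> 0" and c1: "c 1 = 0" and cb: "\<And>j. j \<ge> 1 \<Longrightarrow> c j \<le> n ^ (j - 1)"
    and n: "n \<ge> 1" and x: "0 < x" "x < 1" and m: "m \<ge> 1"
  shows "(\<Sum>js\<in>compositions k m. prod_list (map c js)) \<le> n ^ m / x ^ m * (x^2 / (n * (1 - x))) ^ k"
proof -
  define r where "r = x / n"
  have r: "r > 0" using x n by (simp add: r_def)
  define D where "D = {1..m}"
  define L where "L = {xs. set xs \<subseteq> D \<and> length xs = k}"
  have fin: "finite L" unfolding L_def D_def by (simp add: finite_lists_length_eq)
  have sub: "compositions k m \<subseteq> L"
  proof
    fix js assume "js \<in> compositions k m"
    hence h: "length js = k" "\<forall>j\<in>set js. 1 \<le> j" "sum_list js = m" by (simp_all add: compositions_def)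
    have "set js \<subseteq> {1..m}" using h member_le_sum_list[of _ js] by fastforce
    thus "js \<in> L" using h(1) by (simp add: L_def D_def)
  qed
  have "r ^ m * (\<Sum>js\<in>compositions k m. prod_list (map c js))
      = (\<Sum>js\<in>compositions k m. prod_list (map (\<lambda>j. c j * r ^ j) js))"
    unfolding sum_distrib_left
    by (intro sum.cong refl) (simp add: prod_list_pow compositions_def)
  also have "\<dots> \<le> (\<Sum>js\<in>L. prod_list (map (\<lambda>j. c j * r ^ j) js))"
    by (rule sum_mono2[OF fin sub]) (use r c0 in \<open>auto intro!: prod_list_nonneg\<close>)
  also have "\<dots> = (\<Sum>j\<in>D. c j * r ^ j) ^ k"
    unfolding L_def by (rule sum_lists_pow) (simp add: D_def)
  also have "\<dots> \<le> (x^2 / (n * (1 - x))) ^ k"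
  proof (rule power_mono)
    show "0 \<le> (\<Sum>j\<in>D. c j * r ^ j)" using c0 r by (intro sum_nonneg) auto
    have "(\<Sum>j\<in>D. c j * r ^ j) \<le> (\<Sum>j\<in>D. if j = 1 then 0 else x ^ j / n)"
    proof (rule sum_mono)
      fix j assume j: "j \<in> D"
      show "c j * r ^ j \<le> (if j = 1 then 0 else x ^ j / n)"
      proof (cases "j = 1")
        case True then show ?thesis using c1 by simp
      next
        case False
        have j1: "j \<ge> 1" using j by (simp add: D_def)
        have "c j * r ^ j \<le> n ^ (j - 1) * r ^ j"
          using cb[OF j1] r by (intro mult_right_mono) auto
        also have "\<dots> = x ^ j / n"
        proof -
          have "n ^ j = n * n ^ (j - 1)" using j1 by (cases j) auto
          have "n ^ (j - 1) * r ^ j = n ^ (j - 1) * x ^ j / (n * n ^ (j - 1))"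
            using \<open>n ^ j = n * n ^ (j - 1)\<close> by (simp add: r_def power_divide)
          also have "\<dots> = x ^ j / n" using n by simp
          finally show ?thesis .
        qed
        finally show ?thesis using False by simp
      qed
    qed
    also have "\<dots> = (\<Sum>j\<in>{2..m}. x ^ j / n)"
    proof -
      have "D = insert 1 {2..m}" using m by (auto simp: D_def)
      then have "(\<Sum>j\<in>D. if j = 1 then 0 else x ^ j / n) = (\<Sum>j\<in>{2..m}. if j = 1 then 0 else x ^ j / n)"
        by simp
      also have "\<dots> = (\<Sum>j\<in>{2..m}. x ^ j / n)" by (rule sum.cong) auto
      finally show ?thesis .
    qed
    also have "\<dots> = (\<Sum>j\<in>{2..m}. x ^ j) / n" by (simp add: sum_divide_distrib)
    also have "\<dots> \<le> x^2 / (n * (1 - x))"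
    proof -
      have "(\<Sum>j\<in>{2..m}. x ^ j) \<le> x^2 / (1 - x)"
      proof (cases "m < 2")
        case True then show ?thesis using x by simp
      next
        case False
        then have "(\<Sum>j\<in>{2..m}. x ^ j) = (x^2 - x ^ Suc m) / (1 - x)"
          using x by (subst sum_gp) auto
        also have "\<dots> \<le> x^2 / (1 - x)" using x by (intro divide_right_mono) auto
        finally show ?thesis .
      qed
      then have "(\<Sum>j\<in>{2..m}. x ^ j) / n \<le> x^2 / (1 - x) / n"
        using n by (intro divide_right_mono) auto
      then show ?thesis by (simp add: mult.commute)
    qed
    finally show "(\<Sum>j\<in>D. c j * r ^ j) \<le> x^2 / (n * (1 - x))" .
  qed
  finally have "r ^ m * (\<Sum>js\<in>compositions k m. prod_list (map c js)) \<le> (x^2 / (n * (1 - x))) ^ k" .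
  then have "(\<Sum>js\<in>compositions k m. prod_list (map c js)) \<le> (x^2 / (n * (1 - x))) ^ k / r ^ m"
    using r by (simp add: pos_le_divide_eq mult.commute)
  also have "\<dots> = n ^ m / x ^ m * (x^2 / (n * (1 - x))) ^ k"
  proof -
    have rm: "r ^ m = x ^ m / n ^ m" by (simp add: r_def power_divide)
    have gen: "\<And>B a b::real. B / (a / b) = b / a * B" by simp
    show ?thesis by (simp only: rm gen)
  qed
  finally show ?thesis .
qed


lemma wk_props:
  assumes "n \<ge> 1"
  shows "0 \<le> fst (wk n j) \<and> 0 \<le> snd (wk n j) \<and> fst (wk n j) + n * snd (wk n j) = n ^ j"
proof (induction j)
  case 0 then show ?case by simp
next
  case (Suc j)
  then have a: "0 \<le> fst (wk n j)" "0 \<le> snd (wk n j)" "fst (wk n j) + n * snd (wk n j) = n ^ j" by auto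
  have e: "n * (fst (wk n j) + n * snd (wk n j)) = n * n ^ j" using a(3) by simp
  have b1: "0 \<le> n * snd (wk n j)" using a(2) assms by simp
  have b2: "0 \<le> fst (wk n j) + (n - 1) * snd (wk n j)" using a(1,2) assms by simp
  have b3: "n * snd (wk n j) + n * (fst (wk n j) + (n - 1) * snd (wk n j)) = n * n ^ j"
    using e by (simp add: algebra_simps)
  show ?case using b1 b2 b3 by simp
qed

lemma wk_bound:
  assumes "n \<ge> 1" "j \<ge> 1"
  shows "fst (wk n j) \<le> n ^ (j - 1)"
proof -
  obtain i where j: "j = Suc i" using assms(2) by (cases j) auto
  have "fst (wk n i) + n * snd (wk n i) = n ^ i" "0 \<le> fst (wk n i)" using wk_props[OF assms(1)] by auto
  then have "n * snd (wk n i) \<le> n ^ i" by linarith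
  then show ?thesis using j by simp
qed

lemma walk11_wk:
  assumes "N \<ge> 1"
  shows "walk11 N j = fst (wk (int N - 1) j)"
  using assms by (simp add: walk11_def pow_K)

lemma of_int_prod_list_map:
  "real_of_int (prod_list (map f js)) = prod_list (map (\<lambda>j. real_of_int (f j)) js)"
  by (induction js) auto

lemma part1:
  fixes N k m :: nat and x :: real
  assumes N: "N \<ge> 2" and m: "m \<ge> 1" and x: "0 < x" "x < 1"
  shows "\<bar>real_of_int (calA N k m)\<bar>
             \<le> (real N - 1) ^ m / (real N - 1 - x) ^ k
                * (x powr (2 * real k - real m) / (1 - x) ^ k)"
proof -
  define c where "c j = real_of_int (walk11 N j)" for j
  define n where "n = real N - 1"
  have n: "n \<ge> 1" using N by (simp add: n_def)
  have N1: "N \<ge> 1" "int N - 1 \<ge> 1" using N by auto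
  have c0: "\<And>j. c j \<ge> 0" using wk_props[OF N1(2)] by (simp add: c_def walk11_wk[OF N1(1)])
  have c1: "c 1 = 0" by (simp add: c_def walk11_wk[OF N1(1)])
  have cb: "\<And>j. j \<ge> 1 \<Longrightarrow> c j \<le> n ^ (j - 1)"
  proof -
    fix j :: nat assume j: "j \<ge> 1"
    have "fst (wk (int N - 1) j) \<le> (int N - 1) ^ (j - 1)" by (rule wk_bound[OF N1(2) j])
    hence "real_of_int (fst (wk (int N - 1) j)) \<le> real_of_int ((int N - 1) ^ (j - 1))" by linarith
    then show "c j \<le> n ^ (j - 1)" using N1 by (simp add: c_def walk11_wk n_def)
  qed
  have A: "real_of_int (calA N k m) = (\<Sum>js\<in>compositions k m. prod_list (map c js))"
    by (simp add: calA_def of_int_prod_list_map c_def[abs_def])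
  have A0: "0 \<le> (\<Sum>js\<in>compositions k m. prod_list (map c js))"
    using c0 by (intro sum_nonneg prod_list_nonneg) auto
  have B: "(\<Sum>js\<in>compositions k m. prod_list (map c js)) \<le> n ^ m / x ^ m * (x^2 / (n * (1 - x))) ^ k"
    by (rule main_bound[OF c0 c1 cb n x m])
  define P where "P = n ^ m * x ^ (2 * k) / (x ^ m * (1 - x) ^ k)"
  have P0: "P \<ge> 0" using n x by (simp add: P_def)
  have eq1: "n ^ m / x ^ m * (x^2 / (n * (1 - x))) ^ k = P * (1 / n ^ k)"
  proof -
    have "(x^2 / (n * (1 - x))) ^ k = x ^ (2 * k) / (n ^ k * (1 - x) ^ k)"
      by (simp add: power_divide power_mult_distrib power_mult)
    then show ?thesis by (simp add: P_def)
  qed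
  have pw: "x powr (2 * real k - real m) = x ^ (2 * k) / x ^ m"
    using x by (simp add: powr_diff powr_realpow[symmetric])
  have eq2: "(real N - 1) ^ m / (real N - 1 - x) ^ k * (x powr (2 * real k - real m) / (1 - x) ^ k)
      = P * (1 / (n - x) ^ k)"
    unfolding pw by (simp add: P_def n_def)
  have le: "1 / n ^ k \<le> 1 / (n - x) ^ k"
  proof (rule divide_left_mono)
    show "(n - x) ^ k \<le> n ^ k" using n x by (intro power_mono) auto
    show "0 < n ^ k * (n - x) ^ k" using n x by simp
  qed simp
  have "\<bar>real_of_int (calA N k m)\<bar> = (\<Sum>js\<in>compositions k m. prod_list (map c js))"
    using A A0 by simp
  also have "\<dots> \<le> P * (1 / n ^ k)" using B eq1 by simp
  also have "\<dots> \<le> P * (1 / (n - x) ^ k)" by (rule mult_left_mono[OF le P0])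
  also have "\<dots> = (real N - 1) ^ m / (real N - 1 - x) ^ k * (x powr (2 * real k - real m) / (1 - x) ^ k)"
    using eq2 by simp
  finally show ?thesis .
qed

theorem mainTheorem3:
  fixes N k m :: nat
  assumes "N \<ge> 2" and "k \<ge> 1" and "m \<ge> 1"
  shows "(\<forall>x::real. 0 < x \<and> x < 1 \<longrightarrow>
           \<bar>real_of_int (calA N k m)\<bar>
             \<le> (real N - 1) ^ m / (real N - 1 - x) ^ k
                * (x powr (2 * real k - real m) / (1 - x) ^ k))
       \<and> \<bar>real_of_int (calA N k m)\<bar>
             \<le> 2 powr (real m - real k) * (real N - 1) ^ m / (real N - 3/2) ^ k
       \<and> (m > 2 * k \<longrightarrow>
           \<bar>real_of_int (calA N k m)\<bar>
             \<le> (real N - 1) ^ m / (real N - 1 - (real m - 2 * real k) / (real m - real k)) ^ k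
                * ((real m - real k) ^ (m - k) / ((real m - 2 * real k) ^ (m - 2 * k) * real k ^ k)))"
  proof -
  have P1: "\<forall>x::real. 0 < x \<and> x < 1 \<longrightarrow>
           \<bar>real_of_int (calA N k m)\<bar>
             \<le> (real N - 1) ^ m / (real N - 1 - x) ^ k
                * (x powr (2 * real k - real m) / (1 - x) ^ k)"
    using part1[OF assms(1) assms(3)] by blast
  have P2: "\<bar>real_of_int (calA N k m)\<bar>
             \<le> 2 powr (real m - real k) * (real N - 1) ^ m / (real N - 3/2) ^ k"
  proof -
    have h: "\<bar>real_of_int (calA N k m)\<bar> \<le> (real N - 1) ^ m / (real N - 1 - 1/2) ^ k
                * ((1/2) powr (2 * real k - real m) / (1 - 1/2) ^ k)"
      by (rule P1[rule_format]) simp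
    have e: "(1/2::real) powr (2 * real k - real m) / (1 - 1/2) ^ k = 2 powr (real m - real k)"
    proof -
      have "(1/2::real) powr (2 * real k - real m) = 2 powr (real m - 2 * real k)"
        by (simp add: powr_divide powr_minus_divide[symmetric])
      moreover have "(1 - 1/2::real) ^ k = 1 / 2 powr real k"
        by (simp add: powr_realpow power_divide)
      ultimately show ?thesis by (simp add: powr_add[symmetric])
    qed
    have n32: "(real N - 1 - 1/2) = real N - 3/2" by simp
    have "(real N - 1) ^ m / (real N - 1 - 1/2) ^ k
                * ((1/2) powr (2 * real k - real m) / (1 - 1/2) ^ k) = 2 powr (real m - real k) * (real N - 1) ^ m / (real N - 3/2) ^ k"
      unfolding e n32 by (simp add: ac_simps)
    then show ?thesis using h by simp
  qed
  have P3: "m > 2 * k \<longrightarrow>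
           \<bar>real_of_int (calA N k m)\<bar>
             \<le> (real N - 1) ^ m / (real N - 1 - (real m - 2 * real k) / (real m - real k)) ^ k
                * ((real m - real k) ^ (m - k) / ((real m - 2 * real k) ^ (m - 2 * k) * real k ^ k))"
  proof
    assume mk: "m > 2 * k"
    define a where "a = real m - real k"
    define b where "b = real m - 2 * real k"
    have ab: "a > 0" "b > 0" "b < a" "a - b = real k" using mk assms(2) by (auto simp: a_def b_def)
    have bn: "b = real (m - 2 * k)" using mk by (simp add: b_def of_nat_diff)
    have x: "0 < b / a" "b / a < 1" using ab by auto
    note h = P1[rule_format, OF conjI[OF x]]
    have e: "(b / a) powr (2 * real k - real m) / (1 - b / a) ^ k
        = a ^ (m - k) / (b ^ (m - 2 * k) * real k ^ k)"
    proof -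
      have "(b / a) powr (2 * real k - real m) = (b / a) powr (- real (m - 2 * k))"
      proof -
        have "2 * real k - real m = - real (m - 2 * k)" using mk by (simp add: of_nat_diff)
        then show ?thesis by (simp only:)
      qed
      also have "\<dots> = a ^ (m - 2 * k) / b ^ (m - 2 * k)"
        using ab by (simp add: powr_minus_divide powr_realpow power_divide)
      finally have e1: "(b / a) powr (2 * real k - real m) = a ^ (m - 2 * k) / b ^ (m - 2 * k)" .
      have e2: "(1 - b / a) ^ k = real k ^ k / a ^ k"
      proof -
        have "(a - b) / a = 1 - b / a" using ab(1,2) by (simp add: diff_divide_distrib)
        then have "1 - b / a = real k / a" using ab(4) by simp
        then show ?thesis by (simp add: power_divide)
      qed
      have e3: "a ^ (m - k) = a ^ (m - 2 * k) * a ^ k"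
      proof -
        have "m - k = (m - 2 * k) + k" using mk by simp
        then show ?thesis by (simp only: power_add)
      qed
      show ?thesis unfolding e1 e2 e3 by (simp add: divide_divide_times_eq)
    qed
    show "\<bar>real_of_int (calA N k m)\<bar>
             \<le> (real N - 1) ^ m / (real N - 1 - (real m - 2 * real k) / (real m - real k)) ^ k
                * ((real m - real k) ^ (m - k) / ((real m - 2 * real k) ^ (m - 2 * k) * real k ^ k))"
      using h[unfolded e, unfolded a_def b_def] .
  qed
  show ?thesis using P1 P2 P3 by blast
qed

end
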